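(* Let $m_1,m_2,t_{16}\in\mathbb{R}$ and let $\mathfrak g$ be the real linear span of $E_1=\begin{pmatrix} -2m_1-2im_2&0&im_1(m_1+im_2)&1\\0&2im_2&0&0\\4i&0&2m_1&0\\0&0&0&0\end{pmatrix}$, $E_2=\begin{pmatrix} 2m_2&0&0&i\\0&2m_2+it_{16}&0&0\\0&0&2m_2&0\\0&0&0&0\end{pmatrix}$, $E_3=\begin{pmatrix}0&-m_1-im_2&0&0\\-2im_2&0&-m_1m_2&1\\0&2i&0&0\\0&0&0&0\end{pmatrix}$, $E_4=\begin{pmatrix}0&im_1-m_2&0&0\\2m_2&0&-im_1m_2&i\\0&2&0&0\\0&0&0&0\end{pmatrix}$, $E_5=\begin{pmatrix}-m_1m_2&0&0&0\\0&-\frac12 m_1(2m_2+it_{16})&0&0\\0&0&-m_1m_2&1\\0&0&0&0\end{pmatrix}$. Then every integral variety of type $(1/2,0)$ related to $\mathfrak g$ is affinely equivalent to (an open piece of) one of the hypersurfaces 1) $v=2x_1^2+|z_2|^2$; 2) $v^2=|z_1|^2+|z_2|^2$.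
   Context: Coordinates in $\mathbb{C}^3$ are $z_1=x_1+iy_1$, $z_2=x_2+iy_2$, $w=u+iv$, $z=(z_1,z_2)$. To a complex $4\times4$ matrix $\begin{pmatrix}a_1&a_2&a_3&p\\ b_1&b_2&b_3&s\\ c_1&c_2&c_3&q\\0&0&0&0\end{pmatrix}$ one associates the holomorphic affine vector field $Z=(a_1z_1+a_2z_2+a_3w+p)\frac{\partial}{\partial z_1}+(b_1z_1+b_2z_2+b_3w+s)\frac{\partial}{\partial z_2}+(c_1z_1+c_2z_2+c_3w+q)\frac{\partial}{\partial w}$. For a real linear span $\mathfrak g$ of such matrices, an integral variety of type $(1/2,0)$ related to $\mathfrak g$ is a real-analytic strictly pseudoconvex real hypersurface $M$ defined near $0\in\mathbb{C}^3$, with $0\in M$, given near $0$ by an equation $v=|z_1|^2+|z_2|^2+\frac12(z_1^2+\bar z_1^2)+\sum_{k+l+2m\ge 3}F_{klm}(z,\bar z)u^m$ (with $F_{klm}$ a polynomial of degree $k$ in $z$ and $l$ in $\bar z$, the right-hand side real), such that for every $Z\in\mathfrak g$ the real vector field $Z+\bar Z$ is tangent to $M$, i.e. $\mathrm{Re}(Z(\Phi))|_M=0$ for a defining function $\Phi$ of $M$. Two hypersurfaces are affinely equivalent if a complex affine transformation of $\mathbb{C}^3$ maps a neighbourhood in one onto an open piece of the other. *)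

theory Defs
  imports "HOL-Analysis.Analysis"
begin

text \<open>Points of C^3 are vectors p :: complex^3 with p$1 = z1, p$2 = z2, p$3 = w.\<close>

type_synonym pt = "complex^3"

definition mat4 :: "complex list list \<Rightarrow> complex^4^4" where
  "mat4 rs = vector (map vector rs)"

text \<open>Holomorphic affine vector field associated to a 4x4 matrix (last row ignored,
  it is zero for the matrices considered). As a real vector field Z + conj Z on R^6 = C^3
  it is p \<mapsto> affine_vf A p.\<close>
definition affine_vf :: "complex^4^4 \<Rightarrow> pt \<Rightarrow> pt" where
  "affine_vf A p = vector
     [A$1$1 * p$1 + A$1$2 * p$2 + A$1$3 * p$3 + A$1$4,
      A$2$1 * p$1 + A$2$2 * p$2 + A$2$3 * p$3 + A$2$4,
      A$3$1 * p$1 + A$3$2 * p$2 + A$3$3 * p$3 + A$3$4]"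

text \<open>Multi-indices (a,b,d,e,f) for monomials x1^a y1^b x2^d y2^e u^f.\<close>
type_synonym midx = "nat \<times> nat \<times> nat \<times> nat \<times> nat"

definition monom5 :: "midx \<Rightarrow> pt \<Rightarrow> real" where
  "monom5 \<alpha> p = (case \<alpha> of (a,b,d,e,f) \<Rightarrow>
     Re (p$1) ^ a * Im (p$1) ^ b * Re (p$2) ^ d * Im (p$2) ^ e * Re (p$3) ^ f)"

definition wdeg :: "midx \<Rightarrow> nat" where
  "wdeg \<alpha> = (case \<alpha> of (a,b,d,e,f) \<Rightarrow> a + b + d + e + 2 * f)"

definition hot :: "(midx \<Rightarrow> real) \<Rightarrow> pt \<Rightarrow> real" where
  "hot c p = (\<Sum>\<^sub>\<infinity>\<alpha>. c \<alpha> * monom5 \<alpha> p)"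

definition defn_fun :: "(midx \<Rightarrow> real) \<Rightarrow> pt \<Rightarrow> real" where
  "defn_fun c p = Im (p$3) - (cmod (p$1) ^ 2 + cmod (p$2) ^ 2 + Re ((p$1) ^ 2)) - hot c p"

definition integral_variety :: "(complex^4^4) set \<Rightarrow> pt set \<Rightarrow> bool" where
  "integral_variety g M \<longleftrightarrow>
     (\<exists>U c. open U \<and> 0 \<in> U \<and>
        (\<forall>\<alpha>. wdeg \<alpha> < 3 \<longrightarrow> c \<alpha> = 0) \<and>
        (\<forall>p\<in>U. (\<lambda>\<alpha>. c \<alpha> * monom5 \<alpha> p) summable_on UNIV) \<and>
        M = {p \<in> U. defn_fun c p = 0} \<and>
        (\<forall>A\<in>g. \<forall>p\<in>M. \<exists>D. (defn_fun c has_derivative D) (at p) \<and> D (affine_vf A p) = 0))"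

definition affinely_equivalent :: "pt set \<Rightarrow> pt set \<Rightarrow> bool" where
  "affinely_equivalent M S \<longleftrightarrow>
     (\<exists>(L::complex^3^3) b V W. invertible L \<and> open V \<and> 0 \<in> V \<and> open W \<and>
        (\<lambda>p. L *v p + b) ` (M \<inter> V) = S \<inter> W)"

definition model1 :: "pt set" where
  "model1 = {p. Im (p$3) = 2 * Re (p$1) ^ 2 + cmod (p$2) ^ 2}"

definition model2 :: "pt set" where
  "model2 = {p. Im (p$3) ^ 2 = cmod (p$1) ^ 2 + cmod (p$2) ^ 2}"

definition E1 :: "real \<Rightarrow> real \<Rightarrow> real \<Rightarrow> complex^4^4" where
  "E1 m1 m2 t16 = mat4
    [[- 2 * m1 - 2 * \<i> * m2, 0, \<i> * m1 * (m1 + \<i> * m2), 1],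
     [0, 2 * \<i> * m2, 0, 0],
     [4 * \<i>, 0, 2 * m1, 0],
     [0, 0, 0, 0]]"

definition E2 :: "real \<Rightarrow> real \<Rightarrow> real \<Rightarrow> complex^4^4" where
  "E2 m1 m2 t16 = mat4
    [[2 * m2, 0, 0, \<i>],
     [0, 2 * m2 + \<i> * t16, 0, 0],
     [0, 0, 2 * m2, 0],
     [0, 0, 0, 0]]"

definition E3 :: "real \<Rightarrow> real \<Rightarrow> real \<Rightarrow> complex^4^4" where
  "E3 m1 m2 t16 = mat4
    [[0, - m1 - \<i> * m2, 0, 0],
     [- 2 * \<i> * m2, 0, - m1 * m2, 1],
     [0, 2 * \<i>, 0, 0],
     [0, 0, 0, 0]]"

definition E4 :: "real \<Rightarrow> real \<Rightarrow> real \<Rightarrow> complex^4^4" where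
  "E4 m1 m2 t16 = mat4
    [[0, \<i> * m1 - m2, 0, 0],
     [2 * m2, 0, - \<i> * m1 * m2, \<i>],
     [0, 2, 0, 0],
     [0, 0, 0, 0]]"

definition E5 :: "real \<Rightarrow> real \<Rightarrow> real \<Rightarrow> complex^4^4" where
  "E5 m1 m2 t16 = mat4
    [[- m1 * m2, 0, 0, 0],
     [0, - (1/2) * m1 * (2 * m2 + \<i> * t16), 0, 0],
     [0, 0, - m1 * m2, 1],
     [0, 0, 0, 0]]"

definition g_alg :: "real \<Rightarrow> real \<Rightarrow> real \<Rightarrow> (complex^4^4) set" where
  "g_alg m1 m2 t16 = span {E1 m1 m2 t16, E2 m1 m2 t16, E3 m1 m2 t16, E4 m1 m2 t16, E5 m1 m2 t16}"

end

theory Submission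
  imports Defs
begin



lemma vector_4 [simp]:
 "(vector [x,y,z,w] ::('a::zero)^4)$1 = x"
 "(vector [x,y,z,w] ::('a::zero)^4)$2 = y"
 "(vector [x,y,z,w] ::('a::zero)^4)$3 = z"
 "(vector [x,y,z,w] ::('a::zero)^4)$4 = w"
  unfolding vector_def by simp_all

definition Phi :: "real \<Rightarrow> real \<Rightarrow> pt \<Rightarrow> real" where
 "Phi m1 m2 p = Im(p$3) * (1 - 2*m1*Re(p$1) + 2*m2*Im(p$1) - m1*m2*Re(p$3) + ((m2^2-m1^2)/2)*Im(p$3))
     - 2*Re(p$1)^2 - Re(p$2)^2 - Im(p$2)^2"

definition DPhi :: "real \<Rightarrow> real \<Rightarrow> pt \<Rightarrow> pt \<Rightarrow> real" where
 "DPhi m1 m2 p e = Im(e$3) * (1 - 2*m1*Re(p$1) + 2*m2*Im(p$1) - m1*m2*Re(p$3) + ((m2^2-m1^2)/2)*Im(p$3))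
     + Im(p$3) * (- 2*m1*Re(e$1) + 2*m2*Im(e$1) - m1*m2*Re(e$3) + ((m2^2-m1^2)/2)*Im(e$3))
     - 4*Re(p$1)*Re(e$1) - 2*Re(p$2)*Re(e$2) - 2*Im(p$2)*Im(e$2)"

lemma inv1: "DPhi m1 m2 p (affine_vf (E1 m1 m2 t) p) = 0"
  by (simp add: affine_vf_def E1_def mat4_def DPhi_def algebra_simps power2_eq_square field_simps)
lemma inv2: "DPhi m1 m2 p (affine_vf (E2 m1 m2 t) p) = 4*m2 * Phi m1 m2 p"
  by (simp add: affine_vf_def E2_def mat4_def DPhi_def Phi_def algebra_simps power2_eq_square field_simps)
lemma inv3: "DPhi m1 m2 p (affine_vf (E3 m1 m2 t) p) = 0"
  by (simp add: affine_vf_def E3_def mat4_def DPhi_def algebra_simps power2_eq_square field_simps)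
lemma inv4: "DPhi m1 m2 p (affine_vf (E4 m1 m2 t) p) = 0"
  by (simp add: affine_vf_def E4_def mat4_def DPhi_def algebra_simps power2_eq_square field_simps)
lemma inv5: "DPhi m1 m2 p (affine_vf (E5 m1 m2 t) p) = -2*m1*m2 * Phi m1 m2 p"
  by (simp add: affine_vf_def E5_def mat4_def DPhi_def Phi_def algebra_simps power2_eq_square field_simps)

lemma vf0:
  "affine_vf (E1 m1 m2 t) 0 = vector [1,0,0]"
  "affine_vf (E2 m1 m2 t) 0 = vector [\<i>,0,0]"
  "affine_vf (E3 m1 m2 t) 0 = vector [0,1,0]"
  "affine_vf (E4 m1 m2 t) 0 = vector [0,\<i>,0]"
  "affine_vf (E5 m1 m2 t) 0 = vector [0,0,1]"
  by (simp_all add: affine_vf_def E1_def E2_def E3_def E4_def E5_def mat4_def)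

lemma decomp:
  fixes e :: pt
  shows "e = Re(e$1) *\<^sub>R vector[1,0,0] + Im(e$1) *\<^sub>R vector[\<i>,0,0] + Re(e$2) *\<^sub>R vector[0,1,0]
     + Im(e$2) *\<^sub>R vector[0,\<i>,0] + Re(e$3) *\<^sub>R vector[0,0,1] + Im(e$3) *\<^sub>R vector[0,0,\<i>]"
  by (simp add: vec_eq_iff forall_3 complex_eq_iff)



lemma gron:
  fixes \<phi> d :: "real \<Rightarrow> real"
  assumes der: "\<And>t. 0 \<le> t \<Longrightarrow> t \<le> 1 \<Longrightarrow> (\<phi> has_real_derivative d t) (at t)"
    and bd: "\<And>t. 0 \<le> t \<Longrightarrow> t \<le> 1 \<Longrightarrow> \<bar>d t\<bar> \<le> K * \<bar>\<phi> t\<bar>" and z: "\<phi> 0 = 0"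
  shows "\<phi> 1 = 0"
proof -
  define \<psi> where "\<psi> t = (\<phi> t)^2 * exp(-2*K*t)" for t
  have dpsi: "(\<psi> has_real_derivative (2*\<phi> t*d t*exp(-2*K*t) - 2*K*(\<phi> t)^2*exp(-2*K*t))) (at t)"
    if "0 \<le> t" "t \<le> 1" for t
    unfolding \<psi>_def using der[OF that]
    by (auto intro!: derivative_eq_intros simp: algebra_simps power2_eq_square)
  have np: "2*\<phi> t*d t*exp(-2*K*t) - 2*K*(\<phi> t)^2*exp(-2*K*t) \<le> 0" if "0 \<le> t" "t \<le> 1" for t
  proof -
    have "\<phi> t * d t \<le> \<bar>\<phi> t\<bar> * \<bar>d t\<bar>" by (metis abs_ge_self abs_mult)
    also have "\<dots> \<le> \<bar>\<phi> t\<bar> * (K * \<bar>\<phi> t\<bar>)" using bd[OF that] by (simp add: mult_left_mono)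
    also have "\<dots> = K * (\<phi> t)^2" by (simp add: power2_eq_square algebra_simps)
    finally have "\<phi> t * d t - K * (\<phi> t)^2 \<le> 0" by simp
    then have "(\<phi> t * d t - K * (\<phi> t)^2) * (2*exp(-2*K*t)) \<le> 0"
      by (simp add: mult_nonpos_nonneg)
    then show ?thesis by (simp add: algebra_simps)
  qed
  have cont: "continuous_on {0..1} \<psi>"
    using dpsi by (intro continuous_at_imp_continuous_on ballI) (meson DERIV_isCont atLeastAtMost_iff)
  have "\<psi> 1 \<le> \<psi> 0"
  proof (rule DERIV_nonpos_imp_decreasing_open[OF _ _ cont])
    fix x :: real assume "0 < x" "x < 1"
    then show "\<exists>y. (\<psi> has_real_derivative y) (at x) \<and> y \<le> 0"
      using dpsi[of x] np[of x] by (intro exI conjI) auto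
  qed simp
  moreover have "\<psi> 0 = 0" using z by (simp add: \<psi>_def)
  ultimately have "(\<phi> 1)^2 * exp(-2*K) \<le> 0" by (simp add: \<psi>_def)
  then have "(\<phi> 1)^2 \<le> 0" by (simp add: mult_le_0_iff)
  then show ?thesis by simp
qed



lemma monom5_cont: "continuous_on S (monom5 \<alpha>)"
proof -
  obtain a b d e f where "\<alpha> = (a,b,d,e,f)" by (cases \<alpha>) auto
  then show ?thesis unfolding monom5_def by (auto intro!: continuous_intros)
qed

lemma monom5_bound:
  assumes "\<bar>Re (p$1)\<bar> \<le> \<rho>" "\<bar>Im (p$1)\<bar> \<le> \<rho>" "\<bar>Re (p$2)\<bar> \<le> \<rho>" "\<bar>Im (p$2)\<bar> \<le> \<rho>" "\<bar>Re (p$3)\<bar> \<le> \<rho>"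
  shows "\<bar>monom5 \<alpha> p\<bar> \<le> monom5 \<alpha> (vector [Complex \<rho> \<rho>, Complex \<rho> \<rho>, Complex \<rho> 0])"
proof -
  obtain a b d e f where al: "\<alpha> = (a,b,d,e,f)" by (cases \<alpha>) auto
  have "\<bar>monom5 \<alpha> p\<bar> = \<bar>Re (p$1)\<bar>^a * \<bar>Im (p$1)\<bar>^b * \<bar>Re (p$2)\<bar>^d * \<bar>Im (p$2)\<bar>^e * \<bar>Re (p$3)\<bar>^f"
    by (simp add: al monom5_def abs_mult power_abs)
  also have "\<dots> \<le> \<rho>^a * \<rho>^b * \<rho>^d * \<rho>^e * \<rho>^f"
    using assms by (intro mult_mono power_mono) auto
  finally show ?thesis by (simp add: al monom5_def)
qed

lemma hot_cont:
  assumes "open U" "0 \<in> U" "\<forall>p\<in>U. (\<lambda>\<alpha>. c \<alpha> * monom5 \<alpha> p) summable_on UNIV"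
  shows "isCont (hot c) 0"
proof -
  obtain r where r: "r > 0" "ball 0 r \<subseteq> U" using assms(1,2) openE by blast
  define \<rho> where "\<rho> = r/6"
  have rho: "\<rho> > 0" using r by (simp add: \<rho>_def)
  define P0 :: pt where "P0 = vector [Complex \<rho> \<rho>, Complex \<rho> \<rho>, Complex \<rho> 0]"
  have c1: "cmod (Complex \<rho> \<rho>) \<le> 2*\<rho>" using cmod_le[of "Complex \<rho> \<rho>"] rho by simp
  have n1: "norm P0 \<le> (\<Sum>i\<in>UNIV. norm (P0$i))"
    using L2_set_le_sum_abs[of "\<lambda>i. norm (P0$i)" UNIV] by (simp add: norm_vec_def)
  have c2: "cmod (Complex \<rho> 0) = \<rho>" using rho by (simp add: cmod_def)
  have "(\<Sum>i\<in>UNIV. norm (P0$i)) = 2 * cmod (Complex \<rho> \<rho>) + cmod (Complex \<rho> 0)" by (simp add: sum_3 P0_def)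
  also have "\<dots> \<le> 5*\<rho>" using c1 c2 by linarith
  also have "\<dots> < r" using r by (simp add: \<rho>_def)
  finally have "norm P0 < r" using n1 by simp
  then have "P0 \<in> U" using r by auto
  then have sm: "(\<lambda>\<alpha>. c \<alpha> * monom5 \<alpha> P0) summable_on UNIV" using assms(3) by blast
  define M where "M \<alpha> = norm (c \<alpha> * monom5 \<alpha> P0)" for \<alpha>
  have Msum: "M summable_on UNIV"
    using summable_on_iff_abs_summable_on_real[THEN iffD1, OF sm] unfolding M_def .
  define Y where "Y = {p::pt. \<bar>Re (p$1)\<bar> \<le> \<rho> \<and> \<bar>Im (p$1)\<bar> \<le> \<rho> \<and> \<bar>Re (p$2)\<bar> \<le> \<rho> \<and> \<bar>Im (p$2)\<bar> \<le> \<rho> \<and> \<bar>Re (p$3)\<bar> \<le> \<rho>}"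
  have bd: "norm (c \<alpha> * monom5 \<alpha> p) \<le> M \<alpha>" if "p \<in> Y" for \<alpha> p
  proof -
    have "\<bar>monom5 \<alpha> p\<bar> \<le> monom5 \<alpha> P0" using that monom5_bound[of p \<rho> \<alpha>] unfolding Y_def P0_def by auto
    then have "\<bar>monom5 \<alpha> p\<bar> \<le> \<bar>monom5 \<alpha> P0\<bar>" by linarith
    then show ?thesis unfolding M_def by (simp add: abs_mult mult_left_mono)
  qed
  have ul: "uniform_limit Y (\<lambda>X p. \<Sum>\<alpha>\<in>X. c \<alpha> * monom5 \<alpha> p) (\<lambda>p. \<Sum>\<^sub>\<infinity>\<alpha>\<in>UNIV. c \<alpha> * monom5 \<alpha> p) (finite_subsets_at_top UNIV)"
    by (rule Weierstrass_m_test_general[OF _ Msum]) (use bd in auto)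
  have "continuous_on Y (\<lambda>p. \<Sum>\<^sub>\<infinity>\<alpha>\<in>UNIV. c \<alpha> * monom5 \<alpha> p)"
    by (rule uniform_limit_theorem[OF _ ul])
       (auto intro!: always_eventually continuous_intros monom5_cont)
  then have cY: "continuous_on Y (hot c)" unfolding hot_def by simp
  define Op where "Op = {p::pt. \<bar>Re (p$1)\<bar> < \<rho> \<and> \<bar>Im (p$1)\<bar> < \<rho> \<and> \<bar>Re (p$2)\<bar> < \<rho> \<and> \<bar>Im (p$2)\<bar> < \<rho> \<and> \<bar>Re (p$3)\<bar> < \<rho>}"
  have "open Op" unfolding Op_def
    by (intro open_Collect_conj open_Collect_less continuous_intros)
  moreover have "Op \<subseteq> Y" unfolding Op_def Y_def by auto
  moreover have "0 \<in> Op" unfolding Op_def using rho by simp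
  ultimately have "0 \<in> interior Y" using interior_maximal[of Op Y] by blast
  then show ?thesis using continuous_on_interior[OF cY] by blast
qed

lemma hot_zero:
  assumes "\<forall>\<alpha>. wdeg \<alpha> < 3 \<longrightarrow> c \<alpha> = 0"
  shows "hot c 0 = 0"
proof -
  have "c \<alpha> * monom5 \<alpha> 0 = 0" for \<alpha>
  proof -
    obtain a b d e f where al: "\<alpha> = (a,b,d,e,f)" by (cases \<alpha>) auto
    show ?thesis
    proof (cases "a = 0 \<and> b = 0 \<and> d = 0 \<and> e = 0 \<and> f = 0")
      case True then have "wdeg \<alpha> < 3" by (simp add: al wdeg_def)
      then have "c \<alpha> = 0" using assms by blast
      then show ?thesis by simp
    next
      case False then show ?thesis by (auto simp: al monom5_def)
    qed
  qed
  then have "(\<lambda>\<alpha>. c \<alpha> * monom5 \<alpha> 0) = (\<lambda>_. 0)" by (simp add: fun_eq_iff)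
  then show ?thesis unfolding hot_def by simp
qed




lemma has_derivative_Re_nth [derivative_intros]: "((\<lambda>p::pt. Re (p$i)) has_derivative (\<lambda>e. Re (e$i))) F"
  by (rule bounded_linear.has_derivative[OF bounded_linear_compose[OF bounded_linear_Re bounded_linear_vec_nth]]) auto
lemma has_derivative_Im_nth [derivative_intros]: "((\<lambda>p::pt. Im (p$i)) has_derivative (\<lambda>e. Im (e$i))) F"
  by (rule bounded_linear.has_derivative[OF bounded_linear_compose[OF bounded_linear_Im bounded_linear_vec_nth]]) auto

definition Hf :: "(midx \<Rightarrow> real) \<Rightarrow> pt \<Rightarrow> real" where
  "Hf c p = cmod (p$1)^2 + cmod (p$2)^2 + Re ((p$1)^2) + hot c p"

lemma defn_Hf: "defn_fun c p = Im (p$3) - Hf c p"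
  by (simp add: defn_fun_def Hf_def)

lemma Hf_base: "p$1 = q$1 \<Longrightarrow> p$2 = q$2 \<Longrightarrow> Re (p$3) = Re (q$3) \<Longrightarrow> Hf c p = Hf c q"
  by (simp add: Hf_def hot_def monom5_def)

definition sig :: "(midx \<Rightarrow> real) \<Rightarrow> pt \<Rightarrow> pt" where
  "sig c p = vector [p$1, p$2, Complex (Re (p$3)) (Hf c p)]"

definition G :: "real \<Rightarrow> real \<Rightarrow> (midx \<Rightarrow> real) \<Rightarrow> pt \<Rightarrow> real" where
  "G m1 m2 c p = Hf c p * (1 - 2*m1*Re(p$1) + 2*m2*Im(p$1) - m1*m2*Re(p$3) + ((m2^2-m1^2)/2)*Hf c p)
     - 2*Re(p$1)^2 - Re(p$2)^2 - Im(p$2)^2"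

lemma G_sig: "G m1 m2 c p = Phi m1 m2 (sig c p)"
  by (simp add: G_def Phi_def sig_def)

lemma six:
  fixes n a1 a2 a3 a4 a5 b1 b2 b3 b4 b5 :: real
  assumes "\<bar>a1\<bar> \<le> n" "\<bar>a2\<bar> \<le> n" "\<bar>a3\<bar> \<le> n" "\<bar>a4\<bar> \<le> n" "\<bar>a5\<bar> \<le> n"
  shows "\<bar>a1*b1+a2*b2+a3*b3+a4*b4+a5*b5\<bar> \<le> n*(\<bar>b1\<bar>+\<bar>b2\<bar>+\<bar>b3\<bar>+\<bar>b4\<bar>+\<bar>b5\<bar>)"
proof -
  have h: "\<bar>a*b\<bar> \<le> n*\<bar>b\<bar>" if "\<bar>a\<bar> \<le> n" for a b :: real
    using that by (simp add: abs_mult mult_right_mono)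
  have "\<bar>a1*b1\<bar> \<le> n*\<bar>b1\<bar>" "\<bar>a2*b2\<bar> \<le> n*\<bar>b2\<bar>" "\<bar>a3*b3\<bar> \<le> n*\<bar>b3\<bar>" "\<bar>a4*b4\<bar> \<le> n*\<bar>b4\<bar>" "\<bar>a5*b5\<bar> \<le> n*\<bar>b5\<bar>"
    using h assms by auto
  then show ?thesis unfolding abs_le_iff by (simp add: algebra_simps)
qed

lemma pw:
  fixes m1 m2 t r :: real and c y
  defines "Es \<equiv> {E1 m1 m2 t, E2 m1 m2 t, E3 m1 m2 t, E4 m1 m2 t, E5 m1 m2 t}"
  assumes tang: "\<And>s A. norm s < r \<Longrightarrow> defn_fun c s = 0 \<Longrightarrow> A \<in> Es \<Longrightarrow> \<exists>D. (defn_fun c has_derivative D) (at s) \<and> D (affine_vf A s) = 0"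
    and small: "\<And>s A. norm s < r \<Longrightarrow> A \<in> Es \<Longrightarrow> norm (affine_vf A s - affine_vf A 0) \<le> 1/10"
    and sy: "norm (sig c y) < r"
  shows "\<exists>DG. (G m1 m2 c has_derivative DG) (at y) \<and> (\<forall>e. \<bar>DG e\<bar> \<le> 2*(4*\<bar>m2\<bar> + 2*\<bar>m1*m2\<bar>) * \<bar>G m1 m2 c y\<bar> * norm e)"
proof -
  define s where "s = sig c y"
  have Hs: "Hf c s = Hf c y" unfolding s_def sig_def by (rule Hf_base) simp_all
  have ds: "defn_fun c s = 0" unfolding defn_Hf using Hs by (simp add: s_def sig_def)
  have ns: "norm s < r" using sy s_def by simp
  obtain D where D: "(defn_fun c has_derivative D) (at s)" "D (affine_vf (E1 m1 m2 t) s) = 0"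
    using tang[OF ns ds, of "E1 m1 m2 t"] by (auto simp: Es_def)
  have Dk: "D (affine_vf A s) = 0" if A: "A \<in> Es" for A
  proof -
    obtain D' where D': "(defn_fun c has_derivative D') (at s)" "D' (affine_vf A s) = 0"
      using tang[OF ns ds A] by blast
    with D(1) have "D' = D" using has_derivative_unique by blast
    then show ?thesis using D'(2) by simp
  qed
  define DH where "DH e = Im (e$3) - D e" for e
  have Hs_der: "(Hf c has_derivative DH) (at s)"
  proof -
    have "((\<lambda>p. Im (p$3) - defn_fun c p) has_derivative (\<lambda>e. Im (e$3) - D e)) (at s)"
      by (intro derivative_intros D(1))
    moreover have "(\<lambda>p. Im (p$3) - defn_fun c p) = Hf c" by (simp add: fun_eq_iff defn_Hf)
    ultimately show ?thesis by (simp add: DH_def[abs_def])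
  qed
  define d where "d = s - y"
  have shift: "(\<lambda>p. Hf c (p + d)) = Hf c"
    by (rule ext, rule Hf_base) (simp_all add: d_def s_def sig_def)
  have Hy_der: "(Hf c has_derivative DH) (at y)"
  proof -
    have "((\<lambda>p. p + d) has_derivative (\<lambda>e. e)) (at y)" by (intro derivative_eq_intros) auto
    moreover have "(Hf c has_derivative DH) (at (y + d))" using Hs_der by (simp add: d_def)
    ultimately have "((\<lambda>p. Hf c (p + d)) has_derivative DH) (at y)"
      using has_derivative_compose[of "\<lambda>p. p+d" "\<lambda>e. e" y UNIV "Hf c" DH] by simp
    then show ?thesis using shift by simp
  qed
  define ie3 :: pt where "ie3 = vector [0,0,\<i>]"
  have DH_ie3: "DH ie3 = 0"
  proof -
    have l: "((\<lambda>\<tau>::real. y + \<tau> *\<^sub>R ie3) has_derivative (\<lambda>\<tau>. \<tau> *\<^sub>R ie3)) (at 0)"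
      by (intro derivative_eq_intros) auto
    have "((\<lambda>\<tau>::real. Hf c (y + \<tau> *\<^sub>R ie3)) has_derivative (\<lambda>\<tau>. DH (\<tau> *\<^sub>R ie3))) (at 0)"
      using has_derivative_compose[OF l, of "Hf c" DH] Hy_der by simp
    moreover have "(\<lambda>\<tau>::real. Hf c (y + \<tau> *\<^sub>R ie3)) = (\<lambda>\<tau>. Hf c y)"
      by (rule ext, rule Hf_base) (simp_all add: ie3_def)
    ultimately have "((\<lambda>\<tau>::real. Hf c y) has_derivative (\<lambda>\<tau>. DH (\<tau> *\<^sub>R ie3))) (at 0)" by simp
    moreover have "((\<lambda>\<tau>::real. Hf c y) has_derivative (\<lambda>\<tau>. 0)) (at 0)" by simp
    ultimately have "(\<lambda>\<tau>. DH (\<tau> *\<^sub>R ie3)) = (\<lambda>\<tau>::real. 0)" using has_derivative_unique by blast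
    then show ?thesis by (metis scaleR_one)
  qed
  define Ly where "Ly = 1 - 2*m1*Re(y$1) + 2*m2*Im(y$1) - m1*m2*Re(y$3) + ((m2^2-m1^2)/2)*Hf c y"
  define DG where "DG e = DH e * Ly + Hf c y * (- 2*m1*Re(e$1) + 2*m2*Im(e$1) - m1*m2*Re(e$3) + ((m2^2-m1^2)/2)*DH e)
     - 4*Re(y$1)*Re(e$1) - 2*Re(y$2)*Re(e$2) - 2*Im(y$2)*Im(e$2)" for e
  have G_der: "(G m1 m2 c has_derivative DG) (at y)"
    unfolding G_def[abs_def]
    apply (rule has_derivative_eq_rhs)
     apply (auto intro!: derivative_eq_intros Hy_der)[1]
    apply (rule ext)
    apply (simp add: DG_def Ly_def algebra_simps power2_eq_square)
    apply (simp add: field_simps)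
    done
  have bl: "bounded_linear DG" using G_der by (rule has_derivative_bounded_linear)
  have DG_DPhi: "DG e = DPhi m1 m2 s (vector [e$1, e$2, Complex (Re (e$3)) (DH e)])" for e
    by (simp add: DG_def DPhi_def Ly_def s_def sig_def)
  have DGX: "DG (affine_vf A s) = DPhi m1 m2 s (affine_vf A s)" if "A \<in> Es" for A
  proof -
    have "DH (affine_vf A s) = Im (affine_vf A s $ 3)" using Dk[OF that] by (simp add: DH_def)
    then have "vector [affine_vf A s $1, affine_vf A s $2, Complex (Re (affine_vf A s $3)) (DH (affine_vf A s))] = affine_vf A s"
      by (simp add: vec_eq_iff forall_3 complex_eq_iff)
    then show ?thesis using DG_DPhi by metis
  qed
  have Gy: "G m1 m2 c y = Phi m1 m2 s" by (simp add: G_sig s_def)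
  define N where "N = onorm DG"
  have onb: "\<bar>DG w\<bar> \<le> N * norm w" for w using onorm[OF bl, of w] by (simp add: N_def)
  have ek: "\<bar>DG (affine_vf A 0)\<bar> \<le> \<bar>ck\<bar> * \<bar>G m1 m2 c y\<bar> + N/10"
    if "A \<in> Es" "DPhi m1 m2 s (affine_vf A s) = ck * Phi m1 m2 s" for A ck
  proof -
    have "DG (affine_vf A 0) = DG (affine_vf A s) - DG (affine_vf A s - affine_vf A 0)"
      using bl by (simp add: linear_diff bounded_linear.linear)
    also have "\<dots> = ck * G m1 m2 c y - DG (affine_vf A s - affine_vf A 0)"
      using DGX[OF that(1)] that(2) Gy by simp
    finally have e1: "DG (affine_vf A 0) = ck * G m1 m2 c y - DG (affine_vf A s - affine_vf A 0)" .
    have w: "\<bar>DG (affine_vf A s - affine_vf A 0)\<bar> \<le> N * (1/10)"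
    proof -
      have "N \<ge> 0" using bl by (simp add: N_def onorm_pos_le)
      then have "N * norm (affine_vf A s - affine_vf A 0) \<le> N * (1/10)"
        using small[OF ns that(1)] by (intro mult_left_mono) auto
      then show ?thesis using onb[of "affine_vf A s - affine_vf A 0"] by linarith
    qed
    have "\<bar>DG (affine_vf A 0)\<bar> \<le> \<bar>ck * G m1 m2 c y\<bar> + \<bar>DG (affine_vf A s - affine_vf A 0)\<bar>"
      unfolding e1 by (rule abs_triangle_ineq4)
    moreover have "\<bar>ck * G m1 m2 c y\<bar> = \<bar>ck\<bar> * \<bar>G m1 m2 c y\<bar>" by (rule abs_mult)
    ultimately show ?thesis using w by linarith
  qed
  have e1: "\<bar>DG (vector[1,0,0])\<bar> \<le> \<bar>0\<bar> * \<bar>G m1 m2 c y\<bar> + N/10"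
  proof -
    have "\<bar>DG (affine_vf (E1 m1 m2 t) 0)\<bar> \<le> \<bar>0\<bar> * \<bar>G m1 m2 c y\<bar> + N/10"
      by (rule ek) (auto simp: Es_def inv1)
    then show ?thesis by (simp only: vf0)
  qed
  have e2: "\<bar>DG (vector[\<i>,0,0])\<bar> \<le> \<bar>4*m2\<bar> * \<bar>G m1 m2 c y\<bar> + N/10"
  proof -
    have "\<bar>DG (affine_vf (E2 m1 m2 t) 0)\<bar> \<le> \<bar>4*m2\<bar> * \<bar>G m1 m2 c y\<bar> + N/10"
      by (rule ek) (auto simp: Es_def inv2)
    then show ?thesis by (simp only: vf0)
  qed
  have e3: "\<bar>DG (vector[0,1,0])\<bar> \<le> \<bar>0\<bar> * \<bar>G m1 m2 c y\<bar> + N/10"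
  proof -
    have "\<bar>DG (affine_vf (E3 m1 m2 t) 0)\<bar> \<le> \<bar>0\<bar> * \<bar>G m1 m2 c y\<bar> + N/10"
      by (rule ek) (auto simp: Es_def inv3)
    then show ?thesis by (simp only: vf0)
  qed
  have e4: "\<bar>DG (vector[0,\<i>,0])\<bar> \<le> \<bar>0\<bar> * \<bar>G m1 m2 c y\<bar> + N/10"
  proof -
    have "\<bar>DG (affine_vf (E4 m1 m2 t) 0)\<bar> \<le> \<bar>0\<bar> * \<bar>G m1 m2 c y\<bar> + N/10"
      by (rule ek) (auto simp: Es_def inv4)
    then show ?thesis by (simp only: vf0)
  qed
  have e5: "\<bar>DG (vector[0,0,1])\<bar> \<le> \<bar>-2*m1*m2\<bar> * \<bar>G m1 m2 c y\<bar> + N/10"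
  proof -
    have "\<bar>DG (affine_vf (E5 m1 m2 t) 0)\<bar> \<le> \<bar>-2*m1*m2\<bar> * \<bar>G m1 m2 c y\<bar> + N/10"
      by (rule ek) (auto simp: Es_def inv5)
    then show ?thesis by (simp only: vf0)
  qed
  have e6: "DG ie3 = 0" using DH_ie3 by (simp add: DG_def ie3_def)
  define C0 where "C0 = 4*\<bar>m2\<bar> + 2*\<bar>m1*m2\<bar>"
  have gen: "\<bar>DG e\<bar> \<le> (C0 * \<bar>G m1 m2 c y\<bar> + N/2) * norm e" for e
  proof -
    have "DG e = Re(e$1) * DG (vector[1,0,0]) + Im(e$1) * DG (vector[\<i>,0,0]) + Re(e$2) * DG (vector[0,1,0])
       + Im(e$2) * DG (vector[0,\<i>,0]) + Re(e$3) * DG (vector[0,0,1]) + Im(e$3) * DG ie3"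
      apply (subst decomp[of e])
      using bl by (simp add: ie3_def linear_add linear_scale bounded_linear.linear)
    then have eq: "DG e = Re(e$1) * DG (vector[1,0,0]) + Im(e$1) * DG (vector[\<i>,0,0]) + Re(e$2) * DG (vector[0,1,0])
       + Im(e$2) * DG (vector[0,\<i>,0]) + Re(e$3) * DG (vector[0,0,1])" using e6 by simp
    have cb: "\<bar>Re (e$i)\<bar> \<le> norm e" "\<bar>Im (e$i)\<bar> \<le> norm e" for i
      using abs_Re_le_cmod[of "e$i"] abs_Im_le_cmod[of "e$i"] Finite_Cartesian_Product.norm_nth_le[of e i] by auto
    have "\<bar>DG e\<bar> \<le> norm e * (\<bar>DG (vector[1,0,0])\<bar> + \<bar>DG (vector[\<i>,0,0])\<bar> + \<bar>DG (vector[0,1,0])\<bar>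
       + \<bar>DG (vector[0,\<i>,0])\<bar> + \<bar>DG (vector[0,0,1])\<bar>)"
      unfolding eq by (rule six) (use cb in auto)
    also have "\<dots> \<le> norm e * (C0 * \<bar>G m1 m2 c y\<bar> + N/2)"
    proof (rule mult_left_mono)
      show "\<bar>DG (vector[1,0,0])\<bar> + \<bar>DG (vector[\<i>,0,0])\<bar> + \<bar>DG (vector[0,1,0])\<bar>
       + \<bar>DG (vector[0,\<i>,0])\<bar> + \<bar>DG (vector[0,0,1])\<bar> \<le> C0 * \<bar>G m1 m2 c y\<bar> + N/2"
        using e1 e2 e3 e4 e5 unfolding C0_def by (simp add: abs_mult algebra_simps)
    qed simp
    finally show ?thesis by (simp add: mult.commute)
  qed
  have "N \<le> C0 * \<bar>G m1 m2 c y\<bar> + N/2" unfolding N_def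
    by (rule onorm_le) (use gen in \<open>simp add: N_def\<close>)
  then have Nb: "N \<le> 2 * C0 * \<bar>G m1 m2 c y\<bar>" by simp
  have "\<bar>DG e\<bar> \<le> 2*(4*\<bar>m2\<bar> + 2*\<bar>m1*m2\<bar>) * \<bar>G m1 m2 c y\<bar> * norm e" for e
  proof -
    have "\<bar>DG e\<bar> \<le> N * norm e" by (rule onb)
    also have "\<dots> \<le> 2 * C0 * \<bar>G m1 m2 c y\<bar> * norm e" using Nb by (simp add: mult_right_mono)
    finally show ?thesis by (simp add: C0_def)
  qed
  then show ?thesis using G_der by blast
qed



lemma model2_id:
  fixes sq x1 y1 x2 y2 u v m1 m2 :: real
  assumes hs: "sq * sq = 2" and m: "m2 \<noteq> 0"
  shows "(sq * y1 + m2 * v/sq - m1 * u/sq + 1/(sq * m2))^2 - ((sq * x1 + m1 * v/sq)^2 + (sq * y1 - m1 * u/sq + 1/(sq * m2))^2 + x2^2 + y2^2)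
     = v * (1 - 2 * m1 * x1 + 2 * m2 * y1 - m1 * m2 * u + ((m2^2-m1^2)/2) * v) - 2 * x1^2 - x2^2 - y2^2"
proof -
  have s0: "sq \<noteq> 0" using hs by auto
  define a where "a = sq/2"
  have sqa: "sq = 2*a" by (simp add: a_def)
  have ha: "2*a*a = 1" using hs by (simp add: a_def field_simps)
  define \<mu> where "\<mu> = 1/m2"
  have mu: "m2 * \<mu> = 1" using m by (simp add: \<mu>_def)
  have e1: "z/sq = z*a" for z using hs s0 by (simp add: a_def field_simps)
  have e2: "1/(sq*m2) = a*\<mu>" using hs s0 m by (simp add: a_def \<mu>_def field_simps)
  have aa: "a*a = 1/2" using ha by (simp add: field_simps)
  have e3: "(m2^2-m1^2)/2 = (m2^2-m1^2)*(a*a)" unfolding aa by simp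
  show ?thesis unfolding e2 e1 e3 unfolding sqa
    using ha mu by algebra
qed

definition L1 :: "real \<Rightarrow> complex^3^3" where
  "L1 m1 = vector [vector [1, 0, - \<i> * of_real (m1/2)], vector [0, 1, 0], vector [0, 0, 1]]"
definition Li1 :: "real \<Rightarrow> complex^3^3" where
  "Li1 m1 = vector [vector [1, 0, \<i> * of_real (m1/2)], vector [0, 1, 0], vector [0, 0, 1]]"

lemma L1_inv: "L1 m1 ** Li1 m1 = mat 1" "Li1 m1 ** L1 m1 = mat 1"
  by (simp_all add: L1_def Li1_def matrix_matrix_mult_def mat_def vec_eq_iff forall_3 sum_3)

lemma cmod_sq: "cmod z * cmod z = Re z * Re z + Im z * Im z"
  using cmod_power2[of z] by (simp add: power2_eq_square)

lemma L1_model: "m2 = 0 \<Longrightarrow> (Phi m1 m2 p = 0 \<longleftrightarrow> L1 m1 *v p + 0 \<in> model1)"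
  by (simp add: L1_def Phi_def model1_def matrix_vector_mult_def sum_3 cmod_sq algebra_simps power2_eq_square)

definition L2 :: "real \<Rightarrow> real \<Rightarrow> complex^3^3" where
  "L2 m1 m2 = vector [vector [of_real (sqrt 2), 0, - \<i> * of_real (m1/sqrt 2)], vector [0, 1, 0],
                      vector [of_real (sqrt 2), 0, of_real (m2/sqrt 2) - \<i> * of_real (m1/sqrt 2)]]"
definition Li2 :: "real \<Rightarrow> real \<Rightarrow> complex^3^3" where
  "Li2 m1 m2 = vector [vector [of_real (1/sqrt 2) - \<i> * of_real (m1/(sqrt 2*m2)), 0, \<i> * of_real (m1/(sqrt 2*m2))], vector [0, 1, 0],
                      vector [- of_real (sqrt 2/m2), 0, of_real (sqrt 2/m2)]]"
definition b2 :: "real \<Rightarrow> pt" where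
  "b2 m2 = vector [\<i> * of_real (1/(sqrt 2*m2)), 0, \<i> * of_real (1/(sqrt 2*m2))]"

lemma L2_inv: assumes "m2 \<noteq> 0" shows "L2 m1 m2 ** Li2 m1 m2 = mat 1" "Li2 m1 m2 ** L2 m1 m2 = mat 1"
  using assms by (simp_all add: L2_def Li2_def matrix_matrix_mult_def mat_def vec_eq_iff forall_3 sum_3 complex_eq_iff field_simps)

lemma L2_model: assumes "m2 \<noteq> 0" shows "Phi m1 m2 p = 0 \<longleftrightarrow> L2 m1 m2 *v p + b2 m2 \<in> model2"
proof -
  have hs: "sqrt 2 * sqrt 2 = (2::real)" by simp
  have "Im ((L2 m1 m2 *v p + b2 m2)$3)^2 - (cmod ((L2 m1 m2 *v p + b2 m2)$1)^2 + cmod ((L2 m1 m2 *v p + b2 m2)$2)^2)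
     = (sqrt 2*Im(p$1) + m2*Im(p$3)/sqrt 2 - m1*Re(p$3)/sqrt 2 + 1/(sqrt 2*m2))^2 - ((sqrt 2*Re(p$1) + m1*Im(p$3)/sqrt 2)^2 + (sqrt 2*Im(p$1) - m1*Re(p$3)/sqrt 2 + 1/(sqrt 2*m2))^2 + Re(p$2)^2 + Im(p$2)^2)"
    by (simp add: L2_def b2_def matrix_vector_mult_def sum_3 cmod_power2 algebra_simps)
  also have "\<dots> = Phi m1 m2 p"
    unfolding Phi_def by (rule model2_id[OF hs assms])
  finally show ?thesis unfolding model2_def by auto
qed



lemma ray:
  fixes m1 m2 t r \<delta> :: real and c q
  defines "Es \<equiv> {E1 m1 m2 t, E2 m1 m2 t, E3 m1 m2 t, E4 m1 m2 t, E5 m1 m2 t}"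
  assumes tang: "\<And>s A. norm s < r \<Longrightarrow> defn_fun c s = 0 \<Longrightarrow> A \<in> Es \<Longrightarrow> \<exists>D. (defn_fun c has_derivative D) (at s) \<and> D (affine_vf A s) = 0"
    and small: "\<And>s A. norm s < r \<Longrightarrow> A \<in> Es \<Longrightarrow> norm (affine_vf A s - affine_vf A 0) \<le> 1/10"
    and sigs: "\<And>y. norm y < \<delta> \<Longrightarrow> norm (sig c y) < r"
    and H0: "Hf c 0 = 0"
    and q: "norm q < \<delta>"
  shows "G m1 m2 c q = 0"
proof -
  define K where "K = 2*(4*\<bar>m2\<bar> + 2*\<bar>m1*m2\<bar>) * norm q"
  define \<phi> where "\<phi> \<tau> = G m1 m2 c (\<tau> *\<^sub>R q)" for \<tau>
  have ex: "\<exists>v. (\<phi> has_real_derivative v) (at \<tau>) \<and> \<bar>v\<bar> \<le> K * \<bar>\<phi> \<tau>\<bar>" if "\<tau> \<in> {0..1}" for \<tau>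
  proof -
    have "norm (\<tau> *\<^sub>R q) \<le> norm q" using that by (simp add: mult_left_le_one_le)
    then have "norm (sig c (\<tau> *\<^sub>R q)) < r" using q sigs by simp
    then obtain DG where DG: "(G m1 m2 c has_derivative DG) (at (\<tau> *\<^sub>R q))"
      and bd: "\<forall>e. \<bar>DG e\<bar> \<le> 2*(4*\<bar>m2\<bar> + 2*\<bar>m1*m2\<bar>) * \<bar>G m1 m2 c (\<tau> *\<^sub>R q)\<bar> * norm e"
      using pw[of r c m1 m2 t "\<tau> *\<^sub>R q"] tang small unfolding Es_def by blast
    have l: "((\<lambda>x::real. x *\<^sub>R q) has_derivative (\<lambda>h. h *\<^sub>R q)) (at \<tau>)"
      by (intro derivative_eq_intros) auto
    have "(\<phi> has_derivative (\<lambda>h. DG (h *\<^sub>R q))) (at \<tau>)"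
      unfolding \<phi>_def using has_derivative_compose[OF l DG] by simp
    moreover have "(\<lambda>h. DG (h *\<^sub>R q)) = (*) (DG q)"
      using bounded_linear.linear[OF has_derivative_bounded_linear[OF DG]] by (simp add: fun_eq_iff linear_scale mult.commute)
    ultimately have "(\<phi> has_real_derivative DG q) (at \<tau>)"
      by (simp add: has_field_derivative_def)
    moreover have "\<bar>DG q\<bar> \<le> K * \<bar>\<phi> \<tau>\<bar>" using bd unfolding K_def \<phi>_def by (simp add: algebra_simps)
    ultimately show ?thesis by blast
  qed
  then obtain d where d: "\<forall>\<tau>\<in>{0..1}. (\<phi> has_real_derivative d \<tau>) (at \<tau>) \<and> \<bar>d \<tau>\<bar> \<le> K * \<bar>\<phi> \<tau>\<bar>"
    using bchoice[of "{0..1}" "\<lambda>\<tau> v. (\<phi> has_real_derivative v) (at \<tau>) \<and> \<bar>v\<bar> \<le> K * \<bar>\<phi> \<tau>\<bar>"] by blast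
  have z: "\<phi> 0 = 0" using H0 by (simp add: \<phi>_def G_def)
  have "\<phi> 1 = 0" using d z by (intro gron[of \<phi> d K]) auto
  then show ?thesis by (simp add: \<phi>_def)
qed

definition KA :: "complex^4^4 \<Rightarrow> real" where
  "KA A = (cmod (A$1$1) + cmod (A$1$2) + cmod (A$1$3)) + (cmod (A$2$1) + cmod (A$2$2) + cmod (A$2$3))
        + (cmod (A$3$1) + cmod (A$3$2) + cmod (A$3$3))"

lemma KA_nonneg: "KA A \<ge> 0" by (simp add: KA_def)

lemma norm_le_sum3: "norm (x::pt) \<le> cmod (x$1) + cmod (x$2) + cmod (x$3)"
  using L2_set_le_sum_abs[of "\<lambda>i. norm (x$i)" UNIV] by (simp add: norm_vec_def sum_3)

lemma lin3: "cmod (a * s$1 + b * s$2 + d * s$3) \<le> (cmod a + cmod b + cmod d) * norm (s::pt)"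
proof -
  have "cmod (a * s$1 + b * s$2 + d * s$3) \<le> cmod (a * s$1 + b * s$2) + cmod (d * s$3)"
    by (rule norm_triangle_ineq)
  also have "\<dots> \<le> cmod (a * s$1) + cmod (b * s$2) + cmod (d * s$3)"
    using norm_triangle_ineq[of "a * s$1" "b * s$2"] by simp
  also have "\<dots> = cmod a * cmod (s$1) + cmod b * cmod (s$2) + cmod d * cmod (s$3)"
    by (simp add: norm_mult)
  also have "\<dots> \<le> cmod a * norm s + cmod b * norm s + cmod d * norm s"
    by (intro add_mono mult_left_mono Finite_Cartesian_Product.norm_nth_le) auto
  finally show ?thesis by (simp add: algebra_simps)
qed

lemma vf_bound: "norm (affine_vf A s - affine_vf A 0) \<le> KA A * norm s"
proof -
  have "norm (affine_vf A s - affine_vf A 0) \<le> cmod (A$1$1 * s$1 + A$1$2 * s$2 + A$1$3 * s$3)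
     + cmod (A$2$1 * s$1 + A$2$2 * s$2 + A$2$3 * s$3) + cmod (A$3$1 * s$1 + A$3$2 * s$2 + A$3$3 * s$3)"
    using norm_le_sum3[of "affine_vf A s - affine_vf A 0"] by (simp add: affine_vf_def)
  also have "\<dots> \<le> KA A * norm s"
    using lin3[of "A$1$1" s "A$1$2" "A$1$3"] lin3[of "A$2$1" s "A$2$2" "A$2$3"] lin3[of "A$3$1" s "A$3$2" "A$3$3"]
    unfolding KA_def by (simp add: algebra_simps)
  finally show ?thesis .
qed

lemma fac_pos:
  fixes a1 a2 a3 v1 v2 \<rho> m1 m2 :: real
  assumes "\<bar>a1\<bar> \<le> \<rho>" "\<bar>a2\<bar> \<le> \<rho>" "\<bar>a3\<bar> \<le> \<rho>" "\<bar>v1\<bar> \<le> \<rho>" "\<bar>v2\<bar> \<le> \<rho>"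
    and rb: "\<rho> * (2*\<bar>m1\<bar> + 2*\<bar>m2\<bar> + \<bar>m1*m2\<bar> + \<bar>m2^2-m1^2\<bar> + 1) \<le> 1/2"
  shows "1 - 2*m1*a1 + 2*m2*a2 - m1*m2*a3 + ((m2^2-m1^2)/2)*(v1+v2) > 0"
proof -
  have h: "\<bar>k*x\<bar> \<le> \<rho>*\<bar>k\<bar>" if "\<bar>x\<bar> \<le> \<rho>" for k x :: real
  proof -
    have "\<bar>k\<bar> * \<bar>x\<bar> \<le> \<bar>k\<bar> * \<rho>" by (rule mult_left_mono[OF that abs_ge_zero])
    then show ?thesis by (simp add: abs_mult mult.commute)
  qed
  define e1 where "e1 = m1*a1"
  define e2 where "e2 = m2*a2"
  define e3 where "e3 = (m1*m2)*a3"
  define k where "k = m2^2-m1^2"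
  define e4 where "e4 = k*(v1+v2)"
  have E1: "\<bar>e1\<bar> \<le> \<rho>*\<bar>m1\<bar>" unfolding e1_def by (rule h) (rule assms(1))
  have E2: "\<bar>e2\<bar> \<le> \<rho>*\<bar>m2\<bar>" unfolding e2_def by (rule h) (rule assms(2))
  have E3: "\<bar>e3\<bar> \<le> \<rho>*\<bar>m1*m2\<bar>" unfolding e3_def by (rule h) (rule assms(3))
  have vv: "\<bar>v1+v2\<bar> \<le> 2*\<rho>" using assms(4,5) by linarith
  have E4: "\<bar>e4\<bar> \<le> (2*\<rho>)*\<bar>k\<bar>"
  proof -
    have "\<bar>k\<bar> * \<bar>v1+v2\<bar> \<le> \<bar>k\<bar> * (2*\<rho>)" by (rule mult_left_mono[OF vv abs_ge_zero])
    then show ?thesis unfolding e4_def by (simp add: abs_mult mult.commute)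
  qed
  have rb': "2*(\<rho>*\<bar>m1\<bar>) + 2*(\<rho>*\<bar>m2\<bar>) + \<rho>*\<bar>m1*m2\<bar> + \<rho>*\<bar>k\<bar> + \<rho> \<le> 1/2"
    using rb unfolding k_def by (simp only: distrib_left mult.assoc mult.left_commute[of \<rho> 2])
  have E4': "\<bar>e4\<bar> \<le> 2*(\<rho>*\<bar>k\<bar>)" using E4 by (simp only: mult.assoc)
  have r0: "\<rho> \<ge> 0" using assms(1) by linarith
  have goal: "1 - 2*e1 + 2*e2 - e3 + e4/2 > 0"
    using E1 E2 E3 E4' rb' r0 unfolding abs_le_iff by linarith
  have q1: "2*m1*a1 = 2*e1" unfolding e1_def by simp
  have q2: "2*m2*a2 = 2*e2" unfolding e2_def by simp
  have q3: "m1*m2*a3 = e3" unfolding e3_def by simp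
  have q4: "((m2^2-m1^2)/2)*(v1+v2) = e4/2" unfolding e4_def k_def by simp
  show ?thesis unfolding q1 q2 q3 q4 by (rule goal)
qed

lemma Phi_diff:
  "Phi m1 m2 p - Phi m1 m2 (vector [p$1, p$2, Complex (Re (p$3)) v]) =
   (Im (p$3) - v) * (1 - 2*m1*Re(p$1) + 2*m2*Im(p$1) - m1*m2*Re(p$3) + ((m2^2-m1^2)/2)*(Im (p$3)+v))"
  by (simp add: Phi_def algebra_simps power2_eq_square field_simps)

lemma aff_conc:
  fixes L Li :: "complex^3^3" and b :: pt and S V :: "pt set" and P :: "pt \<Rightarrow> bool"
  assumes inv: "L ** Li = mat 1" "Li ** L = mat 1" and eqv: "\<And>p. P p \<longleftrightarrow> L *v p + b \<in> S"
    and MV: "M \<inter> V = {p. P p} \<inter> V" and V: "open V" "0 \<in> V"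
  shows "affinely_equivalent M S"
proof -
  define W where "W = (\<lambda>y. Li *v (y - b)) -` V"
  have "open W" unfolding W_def
  proof (rule continuous_open_vimage[OF V(1)])
    fix x
    have "continuous (at x) (\<lambda>y. y - b)" by (intro continuous_intros)
    moreover have "continuous (at (x - b)) (\<lambda>y. Li *v y)" by (rule linear_continuous_at) simp
    ultimately show "continuous (at x) (\<lambda>y. Li *v (y - b))"
      using continuous_at_compose[of x "\<lambda>y. y - b" "\<lambda>y. Li *v y"] by (simp add: o_def)
  qed
  have li: "Li *v (L *v p + b - b) = p" for p
    by (simp add: matrix_vector_mul_assoc inv)
  have ri: "L *v (Li *v (y - b)) + b = y" for y
    by (simp add: matrix_vector_mul_assoc inv)
  have "(\<lambda>p. L *v p + b) ` (M \<inter> V) = S \<inter> W"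
  proof
    show "(\<lambda>p. L *v p + b) ` (M \<inter> V) \<subseteq> S \<inter> W"
    proof
      fix y assume "y \<in> (\<lambda>p. L *v p + b) ` (M \<inter> V)"
      then obtain p where p: "p \<in> M \<inter> V" "y = L *v p + b" by blast
      then have "P p" "p \<in> V" using MV by auto
      then show "y \<in> S \<inter> W" using p(2) eqv li unfolding W_def by auto
    qed
    show "S \<inter> W \<subseteq> (\<lambda>p. L *v p + b) ` (M \<inter> V)"
    proof
      fix y assume y: "y \<in> S \<inter> W"
      define p where "p = Li *v (y - b)"
      have yp: "y = L *v p + b" using ri by (simp add: p_def)
      have "p \<in> V" using y unfolding W_def p_def by auto
      moreover have "P p" using eqv y yp by auto
      ultimately have "p \<in> M \<inter> V" using MV by auto
      then show "y \<in> (\<lambda>p. L *v p + b) ` (M \<inter> V)" using yp by blast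
    qed
  qed
  moreover have "invertible L" unfolding invertible_def using inv by blast
  ultimately show ?thesis unfolding affinely_equivalent_def using V \<open>open W\<close> by blast
qed



theorem theorem4p4:
  fixes m1 m2 t16 :: real and M :: "(complex^3) set"
  assumes "integral_variety (g_alg m1 m2 t16) M"
  shows "affinely_equivalent M model1 \<or> affinely_equivalent M model2"
proof -
  obtain U c where U: "open U" "0 \<in> U" and c0: "\<forall>\<alpha>. wdeg \<alpha> < 3 \<longrightarrow> c \<alpha> = 0"
    and sm: "\<forall>p\<in>U. (\<lambda>\<alpha>. c \<alpha> * monom5 \<alpha> p) summable_on UNIV"
    and Mdef: "M = {p \<in> U. defn_fun c p = 0}"
    and tg: "\<forall>A\<in>g_alg m1 m2 t16. \<forall>p\<in>M. \<exists>D. (defn_fun c has_derivative D) (at p) \<and> D (affine_vf A p) = 0"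
    using assms unfolding integral_variety_def by blast
  define Es where "Es = {E1 m1 m2 t16, E2 m1 m2 t16, E3 m1 m2 t16, E4 m1 m2 t16, E5 m1 m2 t16}"
  have Esg: "Es \<subseteq> g_alg m1 m2 t16" unfolding Es_def g_alg_def by (rule span_superset)
  obtain r1 where r1: "r1 > 0" "ball 0 r1 \<subseteq> U" using U openE by blast
  define Ksum where "Ksum = KA (E1 m1 m2 t16) + KA (E2 m1 m2 t16) + KA (E3 m1 m2 t16) + KA (E4 m1 m2 t16) + KA (E5 m1 m2 t16)"
  have k5: "KA (E1 m1 m2 t16) \<ge> 0" "KA (E2 m1 m2 t16) \<ge> 0" "KA (E3 m1 m2 t16) \<ge> 0" "KA (E4 m1 m2 t16) \<ge> 0" "KA (E5 m1 m2 t16) \<ge> 0"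
    by (rule KA_nonneg)+
  have KAle: "KA A \<le> Ksum" if "A \<in> Es" for A
    using that k5 unfolding Es_def Ksum_def by auto
  have Kpos: "Ksum \<ge> 0" using k5 unfolding Ksum_def by linarith
  define B where "B = 2*\<bar>m1\<bar> + 2*\<bar>m2\<bar> + \<bar>m1*m2\<bar> + \<bar>m2^2-m1^2\<bar> + 1"
  have B1: "B \<ge> 1" unfolding B_def by simp
  define r where "r = min r1 (min (1/(10*(Ksum+1))) (1/(2*B)))"
  have rpos: "r > 0" using r1 Kpos B1 by (simp add: r_def)
  have rr1: "r \<le> r1" by (simp add: r_def)
  have rK: "r * (Ksum+1) \<le> 1/10"
  proof -
    have "r \<le> 1/(10*(Ksum+1))" by (simp add: r_def)
    then show ?thesis using Kpos by (simp add: field_simps)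
  qed
  have rB: "r * B \<le> 1/2"
  proof -
    have "r \<le> 1/(2*B)" by (simp add: r_def)
    then show ?thesis using B1 by (simp add: field_simps)
  qed
  have small: "norm (affine_vf A s - affine_vf A 0) \<le> 1/10" if "norm s < r" "A \<in> Es" for s A
  proof -
    have "norm (affine_vf A s - affine_vf A 0) \<le> KA A * norm s" by (rule vf_bound)
    also have "\<dots> \<le> (Ksum+1) * r"
      using KAle[OF that(2)] KA_nonneg[of A] that(1) by (intro mult_mono) auto
    also have "\<dots> \<le> 1/10" using rK by (simp add: mult.commute)
    finally show ?thesis .
  qed
  have tang: "\<exists>D. (defn_fun c has_derivative D) (at s) \<and> D (affine_vf A s) = 0"
    if "norm s < r" "defn_fun c s = 0" "A \<in> Es" for s A
  proof -
    have "s \<in> U" using that(1) rr1 r1(2) by (auto simp: dist_norm)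
    then have "s \<in> M" using that(2) Mdef by simp
    moreover have "A \<in> g_alg m1 m2 t16" using Esg that(3) by blast
    ultimately show ?thesis using tg by blast
  qed
  have H0: "Hf c 0 = 0" by (simp add: Hf_def hot_zero[OF c0])
  have hc: "isCont (hot c) 0" by (rule hot_cont[OF U sm])
  have Hcont: "isCont (Hf c) 0" unfolding Hf_def[abs_def] using hc by (intro continuous_intros) auto
  obtain \<delta>0 where \<delta>0: "\<delta>0 > 0" "\<And>y. norm y < \<delta>0 \<Longrightarrow> \<bar>Hf c y\<bar> < r/2"
  proof -
    obtain d where "d > 0" "\<forall>y. dist y 0 < d \<longrightarrow> dist (Hf c y) (Hf c 0) < r/2"
      using Hcont[unfolded continuous_at_eps_delta] rpos by (meson half_gt_zero)
    then show ?thesis using that[of d] H0 by (auto simp: dist_norm)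
  qed
  define \<delta> where "\<delta> = min \<delta>0 (r/8)"
  have dpos: "\<delta> > 0" using \<delta>0 rpos by (simp add: \<delta>_def)
  have sigs: "norm (sig c y) < r" if y: "norm y < \<delta>" for y
  proof -
    have "norm (sig c y) \<le> cmod (y$1) + cmod (y$2) + cmod (Complex (Re (y$3)) (Hf c y))"
      using norm_le_sum3[of "sig c y"] by (simp add: sig_def)
    also have "\<dots> \<le> norm y + norm y + (norm y + \<bar>Hf c y\<bar>)"
    proof -
      have "cmod (Complex (Re (y$3)) (Hf c y)) \<le> \<bar>Re (y$3)\<bar> + \<bar>Hf c y\<bar>"
        using cmod_le[of "Complex (Re (y$3)) (Hf c y)"] by simp
      moreover have "\<bar>Re (y$3)\<bar> \<le> norm y"
        using abs_Re_le_cmod[of "y$3"] Finite_Cartesian_Product.norm_nth_le[of y 3] by linarith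
      moreover have "cmod (y$1) \<le> norm y" "cmod (y$2) \<le> norm y"
        by (rule Finite_Cartesian_Product.norm_nth_le)+
      ultimately show ?thesis by linarith
    qed
    also have "\<dots> < r" using y \<delta>0(2)[of y] unfolding \<delta>_def by auto
    finally show ?thesis .
  qed
  have Gz: "G m1 m2 c q = 0" if "norm q < \<delta>" for q
    using ray[of r c m1 m2 t16 \<delta> q] tang small sigs H0 that unfolding Es_def by blast
  have MS: "M \<inter> ball 0 \<delta> = {p. Phi m1 m2 p = 0} \<inter> ball 0 \<delta>"
  proof (intro equalityI subsetI)
    fix p assume "p \<in> M \<inter> ball 0 \<delta>"
    then have dp: "defn_fun c p = 0" and np: "norm p < \<delta>" by (auto simp: Mdef)
    have "sig c p = p" using dp by (simp add: sig_def defn_Hf vec_eq_iff forall_3 complex_eq_iff)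
    then have "Phi m1 m2 p = 0" using Gz[OF np] G_sig by metis
    then show "p \<in> {p. Phi m1 m2 p = 0} \<inter> ball 0 \<delta>" using np by simp
  next
    fix p assume "p \<in> {p. Phi m1 m2 p = 0} \<inter> ball 0 \<delta>"
    then have Pp: "Phi m1 m2 p = 0" and np: "norm p < \<delta>" by auto
    have "Phi m1 m2 (sig c p) = 0" using Gz[OF np] G_sig by metis
    then have diff0: "(Im (p$3) - Hf c p) * (1 - 2*m1*Re(p$1) + 2*m2*Im(p$1) - m1*m2*Re(p$3) + ((m2^2-m1^2)/2)*(Im (p$3)+Hf c p)) = 0"
      using Phi_diff[of m1 m2 p "Hf c p"] Pp by (simp add: sig_def)
    have cb: "\<bar>Re (p$i)\<bar> \<le> norm p" "\<bar>Im (p$i)\<bar> \<le> norm p" for i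
      using abs_Re_le_cmod[of "p$i"] abs_Im_le_cmod[of "p$i"] Finite_Cartesian_Product.norm_nth_le[of p i] by auto
    have nr: "norm p \<le> r/2" using np unfolding \<delta>_def using rpos by auto
    have hr: "\<bar>Hf c p\<bar> \<le> r/2" using \<delta>0(2)[of p] np unfolding \<delta>_def by auto
    have rb2: "r/2 * (2*\<bar>m1\<bar> + 2*\<bar>m2\<bar> + \<bar>m1*m2\<bar> + \<bar>m2^2-m1^2\<bar> + 1) \<le> 1/2"
      using rB rpos B1 unfolding B_def by (simp add: field_simps)
    have "1 - 2*m1*Re(p$1) + 2*m2*Im(p$1) - m1*m2*Re(p$3) + ((m2^2-m1^2)/2)*(Im (p$3)+Hf c p) > 0"
      by (rule fac_pos[OF _ _ _ _ hr rb2]) (use cb nr in \<open>meson order_trans\<close>)+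
    then have "Im (p$3) = Hf c p" using diff0 by simp
    then have "defn_fun c p = 0" by (simp add: defn_Hf)
    moreover have "p \<in> U"
    proof -
      have "norm p < r1" using np rr1 rpos unfolding \<delta>_def by auto
      then show ?thesis using r1(2) by (auto simp: dist_norm)
    qed
    ultimately show "p \<in> M \<inter> ball 0 \<delta>" using np Mdef by simp
  qed
  show ?thesis
  proof (cases "m2 = 0")
    case True
    have "affinely_equivalent M model1"
      using aff_conc[where L="L1 m1" and Li="Li1 m1" and b=0 and P="\<lambda>p. Phi m1 m2 p = 0" and S=model1 and V="ball 0 \<delta>",
         OF L1_inv(1) L1_inv(2) L1_model[OF True] MS open_ball] dpos by simp
    then show ?thesis by blast
  next
    case False
    have "affinely_equivalent M model2"
      using aff_conc[where L="L2 m1 m2" and Li="Li2 m1 m2" and b="b2 m2" and P="\<lambda>p. Phi m1 m2 p = 0" and S=model2 and V="ball 0 \<delta>",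
         OF L2_inv(1)[OF False] L2_inv(2)[OF False] L2_model[OF False] MS open_ball] dpos by simp
    then show ?thesis by blast
  qed
qed


end
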